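(* Let $q$ be a prime power, $n\ge1$, and $k$ an integer with $\frac{q-1}{2}<k<q-1$. Then \[\dim(\operatorname{Hull}(C_{n,k}^q))=\dim(C_{n,k}^q)-(2k+1-(q-1))=\binom{n+k}{k}-(2k+1-(q-1)).\] Moreover, $\{\operatorname{ev}(m)\}_{m\in\mathcal{M}}$ is a basis of $\operatorname{Hull}(C_{n,k}^q)$, where $\mathcal{M}$ is the set of all monomials of degree $k$ in $x_0,\dots,x_n$ except the monomials $x_{n-1}^{k-a}x_n^{a}$ with $q-1-k\le a\le k$.
   Context: For a prime power $q$ and integers $n\ge 1$, $k\ge 0$, the projective Reed-Muller code $C_{n,k}^q\subseteq \mathbb{F}_q^N$, $N=\frac{q^{n+1}-1}{q-1}$, is defined as follows. For each point of $\mathbb{P}^n(\mathbb{F}_q)$ choose the affine representative $(p_0,\dots,p_n)\in\mathbb{F}_q^{n+1}\setminus\{0\}$ whose left-most nonzero coordinate equals $1$, and fix an ordering $P_1',\dots,P_N'$ of these representatives; for a polynomial $F$ write $\operatorname{ev}(F)=(F(P_1'),\dots,F(P_N'))$. Then $C_{n,k}^q=\{\operatorname{ev}(F) : F\in \mathbb{F}_q[x_0,\dots,x_n]_k\}$, where $\mathbb{F}_q[x_0,\dots,x_n]_k$ is the space of homogeneous polynomials of degree $k$ together with $0$. Duals are with respect to the standard dot product, and $\operatorname{Hull}(C)=C\cap C^\perp$. *)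

theory Defs
  imports Complex_Main "HOL-Library.Function_Algebras"
begin

text \<open>Codewords of length N are modelled as functions on the set of normalized
representatives of points of P^n(F_q), extended by 0 outside this set.\<close>

definition proj_points :: "nat \<Rightarrow> (nat \<Rightarrow> 'a::field) set" where
  "proj_points n = {p. (\<forall>i>n. p i = 0) \<and>
      (\<exists>i\<le>n. p i = 1 \<and> (\<forall>j<i. p j = 0))}"

definition fscale :: "'a::field \<Rightarrow> ('b \<Rightarrow> 'a) \<Rightarrow> ('b \<Rightarrow> 'a)" where
  "fscale c f = (\<lambda>x. c * f x)"

lemma vector_space_fscale: "vector_space (fscale :: 'a::field \<Rightarrow> _)"
  by unfold_locales (auto simp: fscale_def algebra_simps)

definition monomials :: "nat \<Rightarrow> nat \<Rightarrow> (nat \<Rightarrow> nat) set" where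
  "monomials n k = {e. (\<forall>i>n. e i = 0) \<and> (\<Sum>i\<le>n. e i) = k}"

definition ev_mon :: "nat \<Rightarrow> (nat \<Rightarrow> nat) \<Rightarrow> ((nat \<Rightarrow> 'a::field) \<Rightarrow> 'a)" where
  "ev_mon n e = (\<lambda>p. if p \<in> proj_points n then (\<Prod>i\<le>n. p i ^ e i) else 0)"

definition PRM :: "nat \<Rightarrow> nat \<Rightarrow> ((nat \<Rightarrow> 'a::field) \<Rightarrow> 'a) set" where
  "PRM n k = module.span fscale (ev_mon n ` monomials n k)"

definition dual_code :: "nat \<Rightarrow> ((nat \<Rightarrow> 'a::field) \<Rightarrow> 'a) set \<Rightarrow> ((nat \<Rightarrow> 'a) \<Rightarrow> 'a) set" where
  "dual_code n C = {v. (\<forall>p. p \<notin> proj_points n \<longrightarrow> v p = 0) \<and>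
      (\<forall>u\<in>C. (\<Sum>p\<in>proj_points n. u p * v p) = 0)}"

definition code_hull :: "nat \<Rightarrow> ((nat \<Rightarrow> 'a::field) \<Rightarrow> 'a) set \<Rightarrow> ((nat \<Rightarrow> 'a) \<Rightarrow> 'a) set" where
  "code_hull n C = C \<inter> dual_code n C"

definition dimF :: "((nat \<Rightarrow> 'a::field) \<Rightarrow> 'a) set \<Rightarrow> nat" where
  "dimF S = vector_space.dim fscale S"

definition excl_mon :: "nat \<Rightarrow> nat \<Rightarrow> nat \<Rightarrow> (nat \<Rightarrow> nat)" where
  "excl_mon n k a = (\<lambda>i. if i = n then a else if i = n - 1 then k - a else 0)"

end

theory Submission imports Defs "HOL-Computational_Algebra.Polynomial" "HOL-Library.FuncSet"
begin


lemma char_card: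
  assumes "finite (UNIV::'a::field set)"
  shows "of_nat (card (UNIV::'a set)) = (0::'a)"
proof -
  have "(\<Sum>t\<in>UNIV. t + 1) = (\<Sum>t\<in>UNIV. (t::'a))"
    by (rule sum.reindex_bij_witness[of _ "\<lambda>t. t - 1" "\<lambda>t. t+1"]) auto
  moreover have "(\<Sum>t\<in>UNIV. t+1) = (\<Sum>t\<in>UNIV. t) + (of_nat (card (UNIV::'a set))::'a)"
    by (simp add: sum.distrib)
  ultimately show ?thesis by simp
qed

lemma fermat_ff:
  assumes "finite (UNIV::'a::field set)" and "(t::'a) \<noteq> 0"
  shows "t ^ (card (UNIV::'a set) - 1) = 1"
proof -
  let ?U = "UNIV - {0::'a}"
  have fin: "finite ?U" using assms by simp
  have "(\<Prod>s\<in>?U. t*s) = (\<Prod>s\<in>?U. s)"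
    by (rule prod.reindex_bij_witness[of _ "\<lambda>s. s / t" "\<lambda>s. t * s"]) (auto simp: assms)
  moreover have "(\<Prod>s\<in>?U. t*s) = t ^ card ?U * (\<Prod>s\<in>?U. s)"
    by (simp add: prod.distrib)
  moreover have "card ?U = card (UNIV::'a set) - 1"
    using assms by (simp add: card_Diff_subset)
  moreover have "(\<Prod>s\<in>?U. s) \<noteq> 0" using fin by simp
  ultimately show ?thesis by simp
qed

lemma fermat_ff':
  assumes "finite (UNIV::'a::field set)" and "(t::'a) \<noteq> 0"
  shows "t ^ (card (UNIV::'a set) - Suc 0) = 1"
  using fermat_ff[OF assms] by simp

lemma exists_nonroot:
  assumes "finite (UNIV::'a::field set)" and "0 < m" and "m < card (UNIV::'a set) - 1"
  shows "\<exists>c::'a. c \<noteq> 0 \<and> c ^ m \<noteq> 1"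
proof (rule ccontr)
  assume H: "\<not> ?thesis"
  define p :: "'a poly" where "p = monom 1 m - 1"
  have p0: "p \<noteq> 0"
  proof
    assume "p = 0"
    then have "poly p 0 = 0" by simp
    then show False using assms(2) by (simp add: p_def poly_monom power_0_left)
  qed
  have "card {x. poly p x = 0} \<le> degree p" by (rule card_poly_roots_bound[OF p0])
  also have "degree p \<le> m" unfolding p_def
    by (rule degree_diff_le) (auto simp: degree_monom_le)
  finally have c1: "card {x. poly p x = 0} \<le> m" .
  have "UNIV - {0} \<subseteq> {x. poly p x = 0}" using H by (auto simp: p_def poly_monom)
  then have "card (UNIV - {0::'a}) \<le> card {x. poly p x = 0}"
    by (intro card_mono) (auto intro: rev_finite_subset[OF assms(1)])
  moreover have "card (UNIV - {0::'a}) = card (UNIV::'a set) - 1"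
    using assms by (simp add: card_Diff_subset)
  ultimately show False using c1 assms(3) by simp
qed

definition S :: "nat \<Rightarrow> 'a::field" where "S m = (\<Sum>t\<in>UNIV. t ^ m)"

lemma S0: assumes "finite (UNIV::'a::field set)" shows "(S 0 :: 'a) = 0"
  using char_card[OF assms] by (simp add: S_def)

lemma card_ge2: assumes "finite (UNIV::'a::field set)" shows "card (UNIV::'a set) \<ge> 2"
proof -
  have "{0::'a,1} \<subseteq> UNIV" by simp
  then have "card {0::'a,1} \<le> card (UNIV::'a set)" using assms by (intro card_mono) auto
  then show ?thesis by simp
qed

lemma S_qm1: assumes "finite (UNIV::'a::field set)"
  shows "(S (card (UNIV::'a set) - 1) :: 'a) = -1"
proof -
  let ?q = "card (UNIV::'a set)"
  have q2: "?q \<ge> 2" by (rule card_ge2[OF assms])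
  have "(S (?q - 1) :: 'a) = (\<Sum>t\<in>UNIV. if (t::'a) = 0 then 0 else 1)"
    unfolding S_def by (rule sum.cong[OF refl]) (use q2 in \<open>auto simp: fermat_ff'[OF assms] power_0_left\<close>)
  also have "\<dots> = of_nat (card (UNIV - {0::'a}))"
    using assms by (simp add: sum.If_cases Compl_eq_Diff_UNIV)
  also have "card (UNIV - {0::'a}) = ?q - 1"
    using assms by (simp add: card_Diff_subset)
  also have "(of_nat (?q - 1)::'a) = of_nat ?q - 1" using q2 by (simp add: of_nat_diff)
  finally show ?thesis using char_card[OF assms] by simp
qed

lemma S_small: assumes "finite (UNIV::'a::field set)" and "0 < m" and "m < card (UNIV::'a set) - 1"
  shows "(S m :: 'a) = 0"
proof -
  obtain c :: 'a where c: "c \<noteq> 0" "c ^ m \<noteq> 1" using exists_nonroot[OF assms] by blast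
  have "(S m :: 'a) = (\<Sum>t\<in>UNIV. (c * t) ^ m)" unfolding S_def
    by (rule sum.reindex_bij_witness[of _ "\<lambda>s. c * s" "\<lambda>s. s / c"]) (auto simp: c)
  also have "\<dots> = c ^ m * S m" by (simp add: S_def power_mult_distrib sum_distrib_left)
  finally have "(c ^ m - 1) * S m = 0" by (simp add: algebra_simps)
  then show ?thesis using c by simp
qed

lemma S_zero: assumes "finite (UNIV::'a::field set)" and "0 < m" and "m < 2 * card (UNIV::'a set) - 2"
  and "m \<noteq> card (UNIV::'a set) - 1"
  shows "(S m :: 'a) = 0"
proof (cases "m < card (UNIV::'a set) - 1")
  case True then show ?thesis using S_small[OF assms(1,2)] by blast
next
  case False
  let ?q = "card (UNIV::'a set)"
  have q2: "?q \<ge> 2" by (rule card_ge2[OF assms(1)])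
  define r where "r = m - (?q - 1)"
  have r: "0 < r" "r < ?q - 1" "m = (?q - 1) + r" using False assms unfolding r_def by auto
  have "(S m :: 'a) = S r" unfolding S_def
  proof (intro sum.cong refl)
    fix t :: 'a
    show "t ^ m = t ^ r"
    proof (cases "t = 0")
      case True then show ?thesis using r by (simp add: power_0_left)
    next
      case False
      have "t ^ (?q - 1) = 1" by (rule fermat_ff[OF assms(1) False])
      then show ?thesis using r(3) by (simp add: power_add)
    qed
  qed
  then show ?thesis using S_small[OF assms(1) r(1,2)] by simp
qed


definition Aset :: "nat \<Rightarrow> nat \<Rightarrow> (nat \<Rightarrow> 'a::field) set" where
  "Aset n i = {p. (\<forall>j<i. p j = 0) \<and> p i = 1 \<and> (\<forall>j>n. p j = 0)}"

definition extA :: "nat \<Rightarrow> nat \<Rightarrow> (nat \<Rightarrow> 'a::field) \<Rightarrow> (nat \<Rightarrow> 'a)" where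
  "extA n i f = (\<lambda>j. if j < i then 0 else if j = i then 1 else if j \<le> n then f j else 0)"

lemma Aset_image:
  assumes "i \<le> n"
  shows "Aset n i = extA n i ` PiE {i<..n} (\<lambda>_. UNIV)"
proof
  show "Aset n i \<subseteq> extA n i ` PiE {i<..n} (\<lambda>_. UNIV)"
  proof
    fix p assume p: "p \<in> Aset n i"
    let ?f = "restrict p {i<..n}"
    have "extA n i ?f = p" using p unfolding extA_def Aset_def
      by (auto simp: fun_eq_iff)
    moreover have "?f \<in> PiE {i<..n} (\<lambda>_. UNIV)" by simp
    ultimately show "p \<in> extA n i ` PiE {i<..n} (\<lambda>_. UNIV)" by (metis image_eqI)
  qed
next
  show "extA n i ` PiE {i<..n} (\<lambda>_. UNIV) \<subseteq> Aset n i"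
    using assms by (auto simp: extA_def Aset_def)
qed

lemma extA_inj: "inj_on (extA n i) (PiE {i<..n} (\<lambda>_. UNIV))"
proof
  fix f g :: "nat \<Rightarrow> 'a" assume f: "f \<in> PiE {i<..n} (\<lambda>_. UNIV)" and g: "g \<in> PiE {i<..n} (\<lambda>_. UNIV)"
    and eq: "extA n i f = extA n i g"
  show "f = g"
  proof (rule PiE_ext[OF f g])
    fix j assume "j \<in> {i<..n}"
    then show "f j = g j" using fun_cong[OF eq, of j] by (auto simp: extA_def)
  qed
qed

lemma prod_zero_pows:
  "(\<Prod>j\<in>A. (0::'a::field) ^ h j) = (if \<forall>j\<in>A. h j = 0 then 1 else 0)" if "finite A"
  using that by (induction A rule: finite_induct) (auto simp: power_0_left)

lemma prod_split_at:
  fixes i n :: nat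
  assumes "i \<le> n"
  shows "(\<Prod>j\<le>n. g j) = (\<Prod>j<i. g j) * g i * (\<Prod>j\<in>{i<..n}. (g j :: 'a::comm_monoid_mult))"
proof -
  have "{..n} = {..<i} \<union> (insert i {i<..n})" using assms by (intro set_eqI) (simp, arith)
  then have "(\<Prod>j\<le>n. g j) = (\<Prod>j\<in>{..<i} \<union> (insert i {i<..n}). g j)" by simp
  also have "\<dots> = (\<Prod>j<i. g j) * (\<Prod>j\<in>insert i {i<..n}. g j)"
    by (rule prod.union_disjoint) auto
  also have "(\<Prod>j\<in>insert i {i<..n}. g j) = g i * (\<Prod>j\<in>{i<..n}. g j)" by simp
  finally show ?thesis by (simp add: mult.assoc)
qed

lemma sum_Aset:
  assumes fin: "finite (UNIV::'a::field set)" and "i \<le> n"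
  shows "(\<Sum>p\<in>(Aset n i :: (nat \<Rightarrow> 'a) set). \<Prod>j\<le>n. p j ^ h j)
        = (if \<forall>j<i. h j = 0 then (\<Prod>j\<in>{i<..n}. S (h j)) else 0)"
proof -
  have "(\<Sum>p\<in>(Aset n i :: (nat \<Rightarrow> 'a) set). \<Prod>j\<le>n. p j ^ h j)
      = (\<Sum>f\<in>PiE {i<..n} (\<lambda>_. UNIV). \<Prod>j\<le>n. extA n i f j ^ h j)"
    unfolding Aset_image[OF assms(2)] by (rule sum.reindex[OF extA_inj, unfolded comp_def])
  also have "\<dots> = (\<Sum>f\<in>PiE {i<..n} (\<lambda>_. UNIV).
       (if \<forall>j<i. h j = 0 then 1 else 0) * (\<Prod>j\<in>{i<..n}. f j ^ h j))"
  proof (rule sum.cong[OF refl])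
    fix f :: "nat \<Rightarrow> 'a" assume "f \<in> PiE {i<..n} (\<lambda>_. UNIV)"
    have "(\<Prod>j\<le>n. extA n i f j ^ h j) = (\<Prod>j<i. extA n i f j ^ h j) * extA n i f i ^ h i
        * (\<Prod>j\<in>{i<..n}. extA n i f j ^ h j)" by (rule prod_split_at[OF assms(2)])
    also have "(\<Prod>j<i. extA n i f j ^ h j) = (\<Prod>j<i. 0 ^ h j)"
      by (rule prod.cong) (auto simp: extA_def)
    also have "\<dots> = (if \<forall>j<i. h j = 0 then 1 else 0)" by (simp add: prod_zero_pows)
    also have "(\<Prod>j\<in>{i<..n}. extA n i f j ^ h j) = (\<Prod>j\<in>{i<..n}. f j ^ h j)"
      by (rule prod.cong) (auto simp: extA_def)
    finally show "(\<Prod>j\<le>n. extA n i f j ^ h j) = (if \<forall>j<i. h j = 0 then 1 else 0) * (\<Prod>j\<in>{i<..n}. f j ^ h j)"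
      by (simp add: extA_def)
  qed
  also have "\<dots> = (if \<forall>j<i. h j = 0 then 1 else 0) * (\<Sum>f\<in>PiE {i<..n} (\<lambda>_. UNIV). (\<Prod>j\<in>{i<..n}. f j ^ h j))"
    by (simp add: sum_distrib_left)
  also have "(\<Sum>f\<in>PiE {i<..n} (\<lambda>_. UNIV). (\<Prod>j\<in>{i<..n}. f j ^ h j)) = (\<Prod>j\<in>{i<..n}. \<Sum>t\<in>UNIV. (t::'a) ^ h j)"
    by (rule prod_sum_PiE[symmetric]) (auto simp: fin)
  finally show ?thesis by (auto simp: S_def)
qed

lemma proj_points_Union: "proj_points n = (\<Union>i\<le>n. Aset n i)"
  unfolding proj_points_def Aset_def by auto

lemma Aset_finite: assumes "finite (UNIV::'a::field set)" and "i \<le> n"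
  shows "finite (Aset n i :: (nat \<Rightarrow> 'a) set)"
  unfolding Aset_image[OF assms(2)] using assms(1) by (intro finite_imageI finite_PiE) auto

lemma proj_points_finite: assumes "finite (UNIV::'a::field set)"
  shows "finite (proj_points n :: (nat \<Rightarrow> 'a) set)"
  unfolding proj_points_Union using Aset_finite[OF assms] by auto

lemma sum_proj:
  assumes fin: "finite (UNIV::'a::field set)"
  shows "(\<Sum>p\<in>(proj_points n :: (nat \<Rightarrow> 'a) set). F p) = (\<Sum>i\<le>n. \<Sum>p\<in>Aset n i. F p)"
  unfolding proj_points_Union
proof (rule sum.UNION_disjoint)
  show "\<forall>i\<in>{..n}. finite (Aset n i :: (nat \<Rightarrow> 'a) set)" using Aset_finite[OF fin] by auto
  show "\<forall>i\<in>{..n}. \<forall>j\<in>{..n}. i \<noteq> j \<longrightarrow> Aset n i \<inter> Aset n j = ({}::(nat \<Rightarrow> 'a) set)"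
  proof (intro ballI impI)
    fix i j :: nat assume "i \<noteq> j"
    show "Aset n i \<inter> Aset n j = ({}::(nat \<Rightarrow> 'a) set)"
    proof (rule ccontr)
      assume "Aset n i \<inter> Aset n j \<noteq> ({}::(nat \<Rightarrow> 'a) set)"
      then obtain p :: "nat \<Rightarrow> 'a" where "p \<in> Aset n i" "p \<in> Aset n j" by blast
      then have "p i = 1" "p j = 1" "\<forall>l<i. p l = 0" "\<forall>l<j. p l = 0" unfolding Aset_def by auto
      then show False using \<open>i \<noteq> j\<close> by (metis linorder_neqE_nat zero_neq_one)
    qed
  qed
qed simp


lemma S_nz:
  assumes fin: "finite (UNIV::'a::field set)" and "m \<le> 2 * k" and "k < card (UNIV::'a set) - 1"
    and "m \<noteq> card (UNIV::'a set) - 1"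
  shows "(S m :: 'a) = 0"
proof (cases "m = 0")
  case True then show ?thesis using S0[OF fin] by simp
next
  case False then show ?thesis using S_zero[OF fin, of m] assms by auto
qed

lemma gram:
  fixes e f :: "nat \<Rightarrow> nat" and n k :: nat
  assumes fin: "finite (UNIV::'a::field set)" and n1: "1 \<le> n"
    and kq: "k < card (UNIV::'a set) - 1"
    and e: "e \<in> monomials n k" and f: "f \<in> monomials n k"
  shows "(\<Sum>p\<in>(proj_points n :: (nat \<Rightarrow> 'a) set). ev_mon n e p * ev_mon n f p)
     = (if \<forall>j<n. e j + f j = 0 then 1 else 0)
       - (if (\<forall>j<n-1. e j + f j = 0) \<and> e n + f n = card (UNIV::'a set) - 1 then 1 else (0::'a))"
proof -
  let ?q = "card (UNIV::'a set)"
  define g where "g j = e j + f j" for j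
  have sumg: "(\<Sum>j\<le>n. g j) = 2 * k" using e f
    by (simp add: g_def sum.distrib monomials_def)
  have gle: "g j \<le> 2 * k" if "j \<le> n" for j
  proof -
    have "g j \<le> (\<Sum>j\<le>n. g j)" by (rule member_le_sum) (use that in auto)
    then show ?thesis using sumg by simp
  qed
  define T where "T i = (if \<forall>j<i. g j = 0 then (\<Prod>j\<in>{i<..n}. S (g j)) else (0::'a))" for i
  have "(\<Sum>p\<in>(proj_points n :: (nat \<Rightarrow> 'a) set). ev_mon n e p * ev_mon n f p)
      = (\<Sum>p\<in>(proj_points n :: (nat \<Rightarrow> 'a) set). \<Prod>j\<le>n. p j ^ g j)"
    by (rule sum.cong[OF refl]) (simp add: ev_mon_def g_def power_add prod.distrib)
  also have "\<dots> = (\<Sum>i\<le>n. T i)"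
    unfolding sum_proj[OF fin] T_def by (rule sum.cong[OF refl]) (simp add: sum_Aset[OF fin])
  also have "\<dots> = (if \<forall>j<n. g j = 0 then 1 else 0)
       - (if (\<forall>j<n-1. g j = 0) \<and> g n = ?q - 1 then 1 else (0::'a))"
  proof -
    obtain m where m: "n = Suc m" using n1 by (cases n) auto
    have "(\<Sum>i\<le>n. T i) = (\<Sum>i<m. T i) + T m + T (Suc m)"
      unfolding m lessThan_Suc_atMost[symmetric] by simp
    moreover have "(\<Sum>i<m. T i) = 0"
    proof (rule sum.neutral, rule ballI)
      fix i assume i: "i \<in> {..<m}"
      have "(\<Prod>j\<in>{i<..n}. S (g j)) = (0::'a)"
      proof (cases "g m = ?q - 1")
        case False
        then have "S (g m) = (0::'a)" using S_nz[OF fin gle kq] m by auto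
        then show ?thesis using i m by (intro prod_zero) auto
      next
        case True
        have "g m + g (Suc m) = (\<Sum>j\<in>{m, Suc m}. g j)" by simp
        also have "\<dots> \<le> (\<Sum>j\<le>n. g j)" by (rule sum_mono2) (auto simp: m)
        finally have "g (Suc m) \<noteq> ?q - 1" using True sumg kq by auto
        then have "S (g (Suc m)) = (0::'a)" using S_nz[OF fin gle kq] m by auto
        then show ?thesis using i m by (intro prod_zero) auto
      qed
      then show "T i = 0" by (simp add: T_def)
    qed
    moreover have "T m = (if \<forall>j<m. g j = 0 then S (g (Suc m)) else 0)"
    proof -
      have "{m<..n} = {Suc m}" using m by auto
      then show ?thesis by (auto simp: T_def)
    qed
    moreover have "T (Suc m) = (if \<forall>j<Suc m. g j = 0 then 1 else 0)"
      by (simp add: T_def m)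
    moreover have "S (g (Suc m)) = (if g (Suc m) = ?q - 1 then -1 else (0::'a))"
      using S_qm1[OF fin] S_nz[OF fin gle kq] m by auto
    ultimately show ?thesis using m by auto
  qed
  finally show ?thesis by (simp add: g_def)
qed


lemma monomials_0: "monomials 0 k = {(\<lambda>i. if i = 0 then k else 0)}"
  unfolding monomials_def by (auto simp: fun_eq_iff)

lemma monomials_Suc:
  "monomials (Suc n) k = (\<Union>a\<in>{..k}. (\<lambda>e. e(Suc n := a)) ` monomials n (k - a))"
proof
  show "monomials (Suc n) k \<subseteq> (\<Union>a\<in>{..k}. (\<lambda>e. e(Suc n := a)) ` monomials n (k - a))"
  proof
    fix e assume e: "e \<in> monomials (Suc n) k"
    let ?a = "e (Suc n)"
    have s: "(\<Sum>i\<le>Suc n. e i) = k" using e by (simp add: monomials_def)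
    then have ak: "?a \<le> k" by simp
    have "e(Suc n := 0) \<in> monomials n (k - ?a)"
      using e s by (auto simp: monomials_def)
    moreover have "e = (e(Suc n := 0))(Suc n := ?a)" by simp
    ultimately show "e \<in> (\<Union>a\<in>{..k}. (\<lambda>e. e(Suc n := a)) ` monomials n (k - a))"
      using ak by blast
  qed
next
  show "(\<Union>a\<in>{..k}. (\<lambda>e. e(Suc n := a)) ` monomials n (k - a)) \<subseteq> monomials (Suc n) k"
  proof
    fix x assume "x \<in> (\<Union>a\<in>{..k}. (\<lambda>e. e(Suc n := a)) ` monomials n (k - a))"
    then obtain a e where a: "a \<in> {..k}" and e: "e \<in> monomials n (k - a)" and x: "x = e(Suc n := a)" by blast
    have "(\<Sum>i\<le>n. (e(Suc n := a)) i) = (\<Sum>i\<le>n. e i)" by (rule sum.cong) auto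
    then show "x \<in> monomials (Suc n) k"
      unfolding x using a e by (auto simp: monomials_def)
  qed
qed

lemma monomials_card: "finite (monomials n k) \<and> card (monomials n k) = (n + k) choose k"
proof (induction n arbitrary: k)
  case 0 then show ?case by (simp add: monomials_0)
next
  case (Suc n)
  have inj: "inj_on (\<lambda>e. e(Suc n := a)) (monomials n b)" for a b
  proof (rule inj_onI)
    fix x y assume x: "x \<in> monomials n b" and y: "y \<in> monomials n b" and eq: "x(Suc n := a) = y(Suc n := a)"
    show "x = y"
    proof
      fix i show "x i = y i"
      proof (cases "i = Suc n")
        case True then show ?thesis using x y by (simp add: monomials_def)
      next
        case False then show ?thesis using fun_cong[OF eq, of i] by simp
      qed
    qed
  qed
  have fin: "finite (monomials (Suc n) k)" unfolding monomials_Suc using Suc by auto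
  have "card (monomials (Suc n) k) = (\<Sum>a\<le>k. card ((\<lambda>e. e(Suc n := a)) ` monomials n (k - a)))"
    unfolding monomials_Suc
  proof (rule card_UN_disjoint)
    show "\<forall>i\<in>{..k}. finite ((\<lambda>e. e(Suc n := i)) ` monomials n (k - i))" using Suc by auto
    show "\<forall>i\<in>{..k}. \<forall>j\<in>{..k}. i \<noteq> j \<longrightarrow>
       (\<lambda>e. e(Suc n := i)) ` monomials n (k - i) \<inter> (\<lambda>e. e(Suc n := j)) ` monomials n (k - j) = {}"
    proof (intro ballI impI)
      fix i j :: nat assume "i \<noteq> j"
      show "(\<lambda>e. e(Suc n := i)) ` monomials n (k - i) \<inter> (\<lambda>e. e(Suc n := j)) ` monomials n (k - j) = {}"
      proof (rule ccontr)
        assume "\<not> ?thesis"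
        then obtain x y z where xy: "x = y(Suc n := i)" and xz: "x = z(Suc n := j)" by blast
        have "x (Suc n) = i" using xy by simp
        moreover have "x (Suc n) = j" using xz by simp
        ultimately have "i = j" by simp
        then show False using \<open>i \<noteq> j\<close> by simp
      qed
    qed
  qed simp
  also have "\<dots> = (\<Sum>a\<le>k. (n + (k - a)) choose (k - a))"
    using Suc by (simp add: card_image[OF inj])
  also have "\<dots> = (\<Sum>j\<le>k. (n + j) choose j)"
    by (rule sum.reindex_bij_witness[of _ "\<lambda>j. k - j" "\<lambda>j. k - j"]) auto
  also have "\<dots> = (Suc n + k) choose k" by (simp add: sum_choose_lower)
  finally show ?case using fin by simp
qed


interpretation VS: vector_space "fscale :: 'a::field \<Rightarrow> ('b \<Rightarrow> 'a) \<Rightarrow> ('b \<Rightarrow> 'a)"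
  by (rule vector_space_fscale)

lemma sum_fscale_apply:
  "(\<Sum>x\<in>B. fscale (u x) (v x)) p = (\<Sum>x\<in>B. u x * v x p)"
  by (induction B rule: infinite_finite_induct) (auto simp: fscale_def)

definition phi :: "nat \<Rightarrow> (nat \<Rightarrow> nat) \<Rightarrow> ((nat \<Rightarrow> 'a::field) \<Rightarrow> 'a) \<Rightarrow> 'a" where
  "phi n f v = (\<Sum>p\<in>Aset n 0. v p * (\<Prod>j\<in>{0<..n}. p j ^ (card (UNIV::'a set) - 1 - f j)))"

lemma phi_lin:
  "phi n f (\<Sum>x\<in>B. fscale (c x) (v x)) = (\<Sum>x\<in>B. c x * phi n f (v x))"
  unfolding phi_def sum_fscale_apply
  by (simp add: sum_distrib_left sum_distrib_right mult.assoc sum.swap[of _ B])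

lemma Aset0_sub: "Aset n 0 \<subseteq> proj_points n"
  unfolding proj_points_Union by auto

lemma monomials_eqI:
  assumes e: "e \<in> monomials n k" and f: "f \<in> monomials n k"
    and eq: "\<And>j. j \<in> {0<..n} \<Longrightarrow> e j = f j"
  shows "e = f"
proof
  fix j
  have split: "(\<Sum>j\<le>n. g j) = g 0 + (\<Sum>j\<in>{0<..n}. g j)" for g :: "nat \<Rightarrow> nat"
  proof -
    have "{..n} = insert 0 {0<..n}" by auto
    then show ?thesis by simp
  qed
  have "(\<Sum>j\<in>{0<..n}. e j) = (\<Sum>j\<in>{0<..n}. f j)" using eq by simp
  moreover have "(\<Sum>j\<le>n. e j) = (\<Sum>j\<le>n. f j)" using e f by (simp add: monomials_def)
  ultimately have "e 0 = f 0" using split[of e] split[of f] by simp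
  then show "e j = f j"
    using e f eq by (cases "j = 0"; cases "j > n") (auto simp: monomials_def)
qed

lemma phi_ev:
  assumes fin: "finite (UNIV::'a::field set)" and kq: "k < card (UNIV::'a set) - 1"
    and e: "e \<in> monomials n k" and f: "f \<in> monomials n k"
  shows "phi n f (ev_mon n e :: (nat \<Rightarrow> 'a) \<Rightarrow> 'a) = (if e = f then (-1) ^ n else 0)"
proof -
  let ?q = "card (UNIV::'a set)"
  define h where "h j = e j + (if j = 0 then 0 else ?q - 1 - f j)" for j
  have "phi n f (ev_mon n e :: (nat \<Rightarrow> 'a) \<Rightarrow> 'a) = (\<Sum>p\<in>(Aset n 0 :: (nat \<Rightarrow> 'a) set). \<Prod>j\<le>n. p j ^ h j)"
    unfolding phi_def
  proof (rule sum.cong[OF refl])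
    fix p :: "nat \<Rightarrow> 'a" assume p: "p \<in> Aset n 0"
    then have pp: "p \<in> proj_points n" using Aset0_sub by auto
    have p0: "p 0 = 1" using p by (simp add: Aset_def)
    have "(\<Prod>j\<le>n. p j ^ h j) = (\<Prod>j<0. p j ^ h j) * p 0 ^ h 0 * (\<Prod>j\<in>{0<..n}. p j ^ h j)"
      by (rule prod_split_at) simp
    also have "\<dots> = (\<Prod>j\<in>{0<..n}. p j ^ e j * p j ^ (?q - 1 - f j))"
      using p0 by (simp add: h_def power_add)
    also have "\<dots> = (\<Prod>j\<in>{0<..n}. p j ^ e j) * (\<Prod>j\<in>{0<..n}. p j ^ (?q - 1 - f j))"
      by (rule prod.distrib)
    also have "(\<Prod>j\<in>{0<..n}. p j ^ e j) = (\<Prod>j\<le>n. p j ^ e j)"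
    proof -
      have "(\<Prod>j\<le>n. p j ^ e j) = (\<Prod>j<0. p j ^ e j) * p 0 ^ e 0 * (\<Prod>j\<in>{0<..n}. p j ^ e j)"
        by (rule prod_split_at) simp
      then show ?thesis using p0 by simp
    qed
    finally show "ev_mon n e p * (\<Prod>j\<in>{0<..n}. p j ^ (?q - 1 - f j)) = (\<Prod>j\<le>n. p j ^ h j)"
      using pp by (simp add: ev_mon_def)
  qed
  also have "\<dots> = (\<Prod>j\<in>{0<..n}. S (h j))" using sum_Aset[OF fin, of 0 n h] by simp
  also have "\<dots> = (\<Prod>j\<in>{0<..n}. S (e j + (?q - 1 - f j)))"
    by (rule prod.cong) (auto simp: h_def)
  also have "\<dots> = (if e = f then (-1) ^ n else 0)"
  proof (cases "e = f")
    case True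
    have "(\<Prod>j\<in>{0<..n}. S (e j + (?q - 1 - f j))) = (\<Prod>j\<in>{0<..n}. (-1::'a))"
    proof (rule prod.cong[OF refl])
      fix j assume j: "j \<in> {0<..n}"
      have "e j \<le> k" using e j by (auto simp: monomials_def intro: member_le_sum[where f = e and A = "{..n}", simplified])
      then have "e j + (?q - 1 - f j) = ?q - 1" using True kq by simp
      then show "S (e j + (?q - 1 - f j)) = (-1::'a)" using S_qm1[OF fin] by simp
    qed
    then show ?thesis using True by simp
  next
    case False
    then obtain j where j: "j \<in> {0<..n}" "e j \<noteq> f j" using monomials_eqI[OF e f] by blast
    have ej: "e j \<le> k" using e j(1) by (auto simp: monomials_def intro: member_le_sum[where f = e and A = "{..n}", simplified])
    have fj: "f j \<le> k" using f j(1) by (auto simp: monomials_def intro: member_le_sum[where f = f and A = "{..n}", simplified])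
    have "S (e j + (?q - 1 - f j)) = (0::'a)"
      by (rule S_zero[OF fin]) (use ej fj kq j(2) in auto)
    then have "(\<Prod>j\<in>{0<..n}. S (e j + (?q - 1 - f j))) = (0::'a)"
      using j(1) by (intro prod_zero) auto
    then show ?thesis using False by simp
  qed
  finally show ?thesis .
qed


lemma ev_inj:
  assumes fin: "finite (UNIV::'a::field set)" and kq: "k < card (UNIV::'a set) - 1"
  shows "inj_on (ev_mon n :: _ \<Rightarrow> (nat \<Rightarrow> 'a) \<Rightarrow> 'a) (monomials n k)"
proof (rule inj_onI)
  fix e f assume e: "e \<in> monomials n k" and f: "f \<in> monomials n k"
    and eq: "(ev_mon n e :: (nat \<Rightarrow> 'a) \<Rightarrow> 'a) = ev_mon n f"
  have "phi n f (ev_mon n e :: (nat \<Rightarrow> 'a) \<Rightarrow> 'a) = phi n f (ev_mon n f :: (nat \<Rightarrow> 'a) \<Rightarrow> 'a)"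
    using eq by simp
  then show "e = f" using phi_ev[OF fin kq e f] phi_ev[OF fin kq f f] by (auto split: if_splits)
qed

lemma ev_indep:
  assumes fin: "finite (UNIV::'a::field set)" and kq: "k < card (UNIV::'a set) - 1"
  shows "\<not> VS.dependent (ev_mon n ` monomials n k :: ((nat \<Rightarrow> 'a) \<Rightarrow> 'a) set)"
proof
  let ?B = "monomials n k"
  have finB: "finite ?B" using monomials_card by blast
  have inj: "inj_on (ev_mon n :: _ \<Rightarrow> (nat \<Rightarrow> 'a) \<Rightarrow> 'a) ?B" by (rule ev_inj[OF fin kq])
  have fin2: "finite (ev_mon n ` ?B :: ((nat \<Rightarrow> 'a) \<Rightarrow> 'a) set)" using finB by simp
  assume dep: "VS.dependent (ev_mon n ` monomials n k :: ((nat \<Rightarrow> 'a) \<Rightarrow> 'a) set)"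
  have "\<exists>u. (\<exists>v\<in>(ev_mon n ` ?B :: ((nat \<Rightarrow> 'a) \<Rightarrow> 'a) set). u v \<noteq> 0) \<and>
     (\<Sum>v\<in>(ev_mon n ` ?B :: ((nat \<Rightarrow> 'a) \<Rightarrow> 'a) set). fscale (u v) v) = 0"
    using dep VS.dependent_finite[OF fin2] by (simp only:)
  then obtain u where u: "\<exists>v\<in>(ev_mon n ` ?B :: ((nat \<Rightarrow> 'a) \<Rightarrow> 'a) set). u v \<noteq> 0"
    and s: "(\<Sum>v\<in>(ev_mon n ` ?B :: ((nat \<Rightarrow> 'a) \<Rightarrow> 'a) set). fscale (u v) v) = 0"
    by (elim exE conjE)
  obtain f0 where f0: "f0 \<in> ?B" "u (ev_mon n f0) \<noteq> 0" using u by blast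
  have s2: "(\<Sum>e\<in>?B. fscale (u (ev_mon n e)) (ev_mon n e :: (nat \<Rightarrow> 'a) \<Rightarrow> 'a)) = 0"
    using s unfolding sum.reindex[OF inj] comp_def .
  have "phi n f0 (\<Sum>e\<in>?B. fscale (u (ev_mon n e)) (ev_mon n e :: (nat \<Rightarrow> 'a) \<Rightarrow> 'a))
      = (\<Sum>e\<in>?B. u (ev_mon n e) * phi n f0 (ev_mon n e :: (nat \<Rightarrow> 'a) \<Rightarrow> 'a))"
    by (rule phi_lin)
  also have "\<dots> = (\<Sum>e\<in>?B. if e = f0 then u (ev_mon n e) * (-1) ^ n else 0)"
    by (rule sum.cong[OF refl]) (simp add: phi_ev[OF fin kq _ f0(1)])
  also have "\<dots> = u (ev_mon n f0) * (-1) ^ n" using f0(1) finB by simp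
  finally have "u (ev_mon n f0) * (-1) ^ n = phi n f0 (0 :: (nat \<Rightarrow> 'a) \<Rightarrow> 'a)" using s2 by simp
  also have "\<dots> = 0" by (simp add: phi_def)
  finally show False using f0(2) by simp
qed


definition ip :: "nat \<Rightarrow> ((nat \<Rightarrow> 'a::field) \<Rightarrow> 'a) \<Rightarrow> ((nat \<Rightarrow> 'a) \<Rightarrow> 'a) \<Rightarrow> 'a" where
  "ip n u v = (\<Sum>p\<in>proj_points n. u p * v p)"

lemma ip_lin2:
  "ip n u (\<Sum>x\<in>B. fscale (c x) (v x)) = (\<Sum>x\<in>B. c x * ip n u (v x))"
  unfolding ip_def sum_fscale_apply
  by (simp add: sum_distrib_left sum_distrib_right mult.assoc mult.left_commute sum.swap[of _ B])

lemma mon_le: "e \<in> monomials n k \<Longrightarrow> e j \<le> k"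
  by (cases "j \<le> n") (auto simp: monomials_def intro: member_le_sum[where f = e and A = "{..n}", simplified])

lemma sum_two_last:
  fixes g :: "nat \<Rightarrow> nat"
  assumes "1 \<le> n"
  shows "(\<Sum>j\<le>n. g j) = (\<Sum>j<n-1. g j) + g (n - 1) + g n"
proof -
  obtain m where m: "n = Suc m" using assms by (cases n) auto
  show ?thesis unfolding m by (simp add: lessThan_Suc_atMost[symmetric])
qed

lemma excl_in:
  assumes "1 \<le> n" "a \<le> k"
  shows "excl_mon n k a \<in> monomials n k"
proof -
  have "(\<Sum>j\<le>n. excl_mon n k a j) = (\<Sum>j<n-1. excl_mon n k a j) + excl_mon n k a (n-1) + excl_mon n k a n"
    by (rule sum_two_last[OF assms(1)])
  also have "(\<Sum>j<n-1. excl_mon n k a j) = 0" by (auto simp: excl_mon_def)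
  finally show ?thesis using assms by (auto simp: monomials_def excl_mon_def)
qed

lemma excl_char:
  assumes n1: "1 \<le> n" and e: "e \<in> monomials n k" and "a \<le> k"
  shows "((\<forall>j<n-1. e j = 0) \<and> e n = a) \<longleftrightarrow> e = excl_mon n k a"
proof
  assume H: "(\<forall>j<n-1. e j = 0) \<and> e n = a"
  have "(\<Sum>j\<le>n. e j) = (\<Sum>j<n-1. e j) + e (n-1) + e n" by (rule sum_two_last[OF n1])
  then have "e (n - 1) + a = k" using H e by (simp add: monomials_def)
  then have "e (n - 1) = k - a" by simp
  note en1 = this
  show "e = excl_mon n k a"
  proof
    fix j
    consider "j = n" | "j = n - 1" "j \<noteq> n" | "j < n - 1" | "j > n" using n1 by linarith
    then show "e j = excl_mon n k a j"
      by cases (use H e en1 in \<open>auto simp: excl_mon_def monomials_def\<close>)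
  qed
next
  assume "e = excl_mon n k a"
  then show "(\<forall>j<n-1. e j = 0) \<and> e n = a" by (auto simp: excl_mon_def)
qed

lemma allzero_char:
  assumes n1: "1 \<le> n" and e: "e \<in> monomials n k"
  shows "(\<forall>j<n. e j = 0) \<longleftrightarrow> e = excl_mon n k k"
proof -
  have s: "(\<Sum>j\<le>n. e j) = (\<Sum>j<n-1. e j) + e (n-1) + e n" by (rule sum_two_last[OF n1])
  have "(\<forall>j<n. e j = 0) \<longleftrightarrow> (\<forall>j<n-1. e j = 0) \<and> e n = k"
  proof
    assume H: "\<forall>j<n. e j = 0"
    then have "(\<Sum>j<n-1. e j) = 0" by simp
    then show "(\<forall>j<n-1. e j = 0) \<and> e n = k" using H s e n1 by (simp add: monomials_def)
  next
    assume H: "(\<forall>j<n-1. e j = 0) \<and> e n = k"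
    then have "e (n-1) = 0" using s e by (simp add: monomials_def)
    note en1 = this
    show "\<forall>j<n. e j = 0"
    proof (intro allI impI)
      fix j assume "j < n"
      then consider "j < n - 1" | "j = n - 1" by linarith
      then show "e j = 0" by cases (use H en1 in auto)
    qed
  qed
  also have "\<dots> \<longleftrightarrow> e = excl_mon n k k" by (rule excl_char[OF n1 e]) simp
  finally show ?thesis .
qed


lemma excl_inj: "1 \<le> n \<Longrightarrow> excl_mon n k a = excl_mon n k b \<Longrightarrow> a = b"
  by (drule fun_cong[of _ _ n]) (simp add: excl_mon_def)

lemma gram_excl:
  assumes fin: "finite (UNIV::'a::field set)" and n1: "1 \<le> n"
    and kq: "k < card (UNIV::'a set) - 1"
    and b1: "card (UNIV::'a set) - 1 - k \<le> b" and b2: "b \<le> k" and e: "e \<in> monomials n k"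
  shows "ip n (ev_mon n (excl_mon n k b)) (ev_mon n e :: (nat \<Rightarrow> 'a) \<Rightarrow> 'a)
     = (if b = k \<and> e = excl_mon n k k then 1 else 0)
       - (if e = excl_mon n k (card (UNIV::'a set) - 1 - b) then 1 else 0)"
proof -
  let ?q = "card (UNIV::'a set)"
  let ?E = "excl_mon n k"
  have Eb: "?E b \<in> monomials n k" by (rule excl_in[OF n1 b2])
  have c1: "(\<forall>j<n. ?E b j + e j = 0) \<longleftrightarrow> (b = k \<and> e = ?E k)"
  proof -
    have "(\<forall>j<n. ?E b j + e j = 0) \<longleftrightarrow> (\<forall>j<n. ?E b j = 0) \<and> (\<forall>j<n. e j = 0)" by auto
    also have "\<dots> \<longleftrightarrow> ?E b = ?E k \<and> e = ?E k"
      using allzero_char[OF n1 Eb] allzero_char[OF n1 e] by simp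
    also have "\<dots> \<longleftrightarrow> b = k \<and> e = ?E k" using excl_inj[OF n1] by blast
    finally show ?thesis .
  qed
  have c2: "((\<forall>j<n-1. ?E b j + e j = 0) \<and> ?E b n + e n = ?q - 1) \<longleftrightarrow> e = ?E (?q - 1 - b)"
  proof -
    have "((\<forall>j<n-1. ?E b j + e j = 0) \<and> ?E b n + e n = ?q - 1)
        \<longleftrightarrow> ((\<forall>j<n-1. e j = 0) \<and> e n = ?q - 1 - b)"
      using b2 kq by (auto simp: excl_mon_def)
    also have "\<dots> \<longleftrightarrow> e = ?E (?q - 1 - b)" by (rule excl_char[OF n1 e]) (use b1 in simp)
    finally show ?thesis .
  qed
  show ?thesis unfolding ip_def gram[OF fin n1 kq Eb e] c1 c2 ..
qed

lemma gram_M: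
  assumes fin: "finite (UNIV::'a::field set)" and n1: "1 \<le> n"
    and kq: "k < card (UNIV::'a set) - 1" and kq2: "card (UNIV::'a set) - 1 < 2 * k"
    and m: "m \<in> monomials n k"
    and mE: "m \<notin> {excl_mon n k a | a. card (UNIV::'a set) - 1 - k \<le> a \<and> a \<le> k}"
    and e: "e \<in> monomials n k"
  shows "ip n (ev_mon n e) (ev_mon n m :: (nat \<Rightarrow> 'a) \<Rightarrow> 'a) = 0"
proof -
  let ?q = "card (UNIV::'a set)"
  have c1: "\<not> (\<forall>j<n. e j + m j = 0)"
  proof
    assume "\<forall>j<n. e j + m j = 0"
    then have "m = excl_mon n k k" using allzero_char[OF n1 m] by simp
    moreover have "card (UNIV::'a set) - 1 - k \<le> k" using kq2 by simp
    ultimately have "m \<in> {excl_mon n k a | a. card (UNIV::'a set) - 1 - k \<le> a \<and> a \<le> k}" by blast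
    then show False using mE by blast
  qed
  have c2: "\<not> ((\<forall>j<n-1. e j + m j = 0) \<and> e n + m n = ?q - 1)"
  proof
    assume H: "(\<forall>j<n-1. e j + m j = 0) \<and> e n + m n = ?q - 1"
    have mk: "m n \<le> k" by (rule mon_le[OF m])
    have ek: "e n \<le> k" by (rule mon_le[OF e])
    have "m = excl_mon n k (m n)" using excl_char[OF n1 m mk] H by simp
    moreover have "?q - 1 - k \<le> m n"
    proof -
      have "e n + m n = ?q - 1" using H by simp
      then show ?thesis using ek by linarith
    qed
    ultimately show False using mE mk by blast
  qed
  show ?thesis unfolding ip_def gram[OF fin n1 kq e m] using c1 c2 by simp
qed


lemma subspace_dual: "VS.subspace (dual_code n C :: ((nat \<Rightarrow> 'a::field) \<Rightarrow> 'a) set)"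
  unfolding VS.subspace_def dual_code_def
  by (auto simp: fscale_def plus_fun_def zero_fun_def distrib_left sum.distrib
      mult.left_commute[of _ "_::'a"] sum_distrib_left[symmetric])

lemma subspace_orth: "VS.subspace {u :: (nat \<Rightarrow> 'a::field) \<Rightarrow> 'a. (\<Sum>p\<in>P. u p * v p) = 0}"
  unfolding VS.subspace_def
  by (auto simp: fscale_def plus_fun_def zero_fun_def distrib_right sum.distrib
      mult.assoc sum_distrib_left[symmetric])

theorem mainTheorem10:
  fixes n k q :: nat
  assumes "finite (UNIV :: 'a::field set)" and "card (UNIV :: 'a set) = q"
    and "n \<ge> 1"
    and "q - 1 < 2 * k" and "k < q - 1"
  shows "dimF (code_hull n (PRM n k :: ((nat \<Rightarrow> 'a) \<Rightarrow> 'a) set))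
           = dimF (PRM n k :: ((nat \<Rightarrow> 'a) \<Rightarrow> 'a) set) - (2 * k + 1 - (q - 1))
       \<and> dimF (PRM n k :: ((nat \<Rightarrow> 'a) \<Rightarrow> 'a) set) = (n + k) choose k
       \<and> (let M = monomials n k - {excl_mon n k a | a. q - 1 - k \<le> a \<and> a \<le> k} in
            inj_on (ev_mon n :: _ \<Rightarrow> (nat \<Rightarrow> 'a) \<Rightarrow> 'a) M
          \<and> \<not> module.dependent fscale (ev_mon n ` M :: ((nat \<Rightarrow> 'a) \<Rightarrow> 'a) set)
          \<and> module.span fscale (ev_mon n ` M) = code_hull n (PRM n k :: ((nat \<Rightarrow> 'a) \<Rightarrow> 'a) set))"
proof -
  have fin: "finite (UNIV :: 'a set)" by (rule assms(1))
  have n1: "1 \<le> n" by (rule assms(3))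
  have kq: "k < card (UNIV::'a set) - 1" using assms by simp
  have kq2: "card (UNIV::'a set) - 1 < 2 * k" using assms by simp
  define mons where "mons = monomials n k"
  define R where "R = {q - 1 - k..k}"
  define Ex where "Ex = {excl_mon n k a | a. q - 1 - k \<le> a \<and> a \<le> k}"
  define M where "M = mons - Ex"
  define ev where "ev = (ev_mon n :: _ \<Rightarrow> (nat \<Rightarrow> 'a) \<Rightarrow> 'a)"
  define E where "E = excl_mon n k"
  have finmons: "finite mons" and cardmons: "card mons = (n + k) choose k"
    using monomials_card unfolding mons_def by blast+
  have inj: "inj_on ev mons" unfolding ev_def mons_def by (rule ev_inj[OF fin kq])
  have indep: "\<not> VS.dependent (ev ` mons)" unfolding ev_def mons_def by (rule ev_indep[OF fin kq])
  have Ex_img: "Ex = E ` R" unfolding Ex_def R_def E_def by auto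
  have E_in: "E a \<in> mons" if "a \<le> k" for a unfolding E_def mons_def by (rule excl_in[OF n1 that])
  have Ex_sub: "Ex \<subseteq> mons" unfolding Ex_img R_def using E_in by auto
  have injE: "inj_on E R" unfolding E_def by (rule inj_onI) (rule excl_inj[OF n1])
  have cardEx0: "card Ex = card R" unfolding Ex_img by (rule card_image[OF injE])
  have cardEx: "card Ex = Suc k - (q - 1 - k)" unfolding cardEx0 R_def by simp
  have PRM_eq: "PRM n k = VS.span (ev ` mons)" unfolding PRM_def ev_def mons_def ..
  have dimPRM: "dimF (PRM n k :: ((nat \<Rightarrow> 'a) \<Rightarrow> 'a) set) = card mons"
    unfolding dimF_def PRM_eq VS.dim_span_eq_card_independent[OF indep] card_image[OF inj] ..
  have indepM: "\<not> VS.dependent (ev ` M)"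
    using indep VS.dependent_mono[of "ev ` M" "ev ` mons"] unfolding M_def by blast
  have injM: "inj_on ev M" using inj unfolding M_def by (rule inj_on_subset) blast
  have ip_dual: "ip n u v = 0" if "u \<in> PRM n k" "v \<in> dual_code n (PRM n k)" for u v :: "(nat \<Rightarrow> 'a) \<Rightarrow> 'a"
    using that unfolding dual_code_def ip_def by auto
  have sub1: "VS.span (ev ` M) \<subseteq> code_hull n (PRM n k)"
  proof (rule VS.span_minimal)
    show "VS.subspace (code_hull n (PRM n k) :: ((nat \<Rightarrow> 'a) \<Rightarrow> 'a) set)"
      unfolding code_hull_def PRM_def by (rule VS.subspace_inter[OF VS.subspace_span subspace_dual])
    show "ev ` M \<subseteq> code_hull n (PRM n k)"
    proof
      fix w assume "w \<in> ev ` M"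
      then obtain m where m: "m \<in> M" and w: "w = ev m" by blast
      have mm: "m \<in> monomials n k" using m unfolding M_def mons_def by blast
      have mE: "m \<notin> {excl_mon n k a | a. card (UNIV::'a set) - 1 - k \<le> a \<and> a \<le> k}"
        using m assms(2) unfolding M_def Ex_def by blast
      have "w \<in> PRM n k" unfolding PRM_eq w using m unfolding M_def by (intro VS.span_base) blast
      moreover have "w \<in> dual_code n (PRM n k)"
        unfolding dual_code_def
      proof (intro CollectI conjI allI impI ballI)
        fix p :: "nat \<Rightarrow> 'a" assume "p \<notin> proj_points n"
        then show "w p = 0" unfolding w ev_def by (simp add: ev_mon_def)
      next
        fix u :: "(nat \<Rightarrow> 'a) \<Rightarrow> 'a" assume "u \<in> PRM n k"
        then have "u \<in> VS.span (ev ` mons)" unfolding PRM_eq .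
        moreover have "VS.span (ev ` mons) \<subseteq> {u. (\<Sum>p\<in>proj_points n. u p * w p) = 0}"
        proof (rule VS.span_minimal[OF _ subspace_orth])
          show "ev ` mons \<subseteq> {u. (\<Sum>p\<in>proj_points n. u p * w p) = 0}"
            using gram_M[OF fin n1 kq kq2 mm mE] unfolding ip_def w ev_def mons_def by auto
        qed
        ultimately show "(\<Sum>p\<in>proj_points n. u p * w p) = 0" by blast
      qed
      ultimately show "w \<in> code_hull n (PRM n k)" unfolding code_hull_def by blast
    qed
  qed
  have sub2: "code_hull n (PRM n k) \<subseteq> VS.span (ev ` M)"
  proof
    fix v :: "(nat \<Rightarrow> 'a) \<Rightarrow> 'a" assume v: "v \<in> code_hull n (PRM n k)"
    then have vP: "v \<in> VS.span (ev ` mons)" and vD: "v \<in> dual_code n (PRM n k)"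
      unfolding code_hull_def PRM_eq by auto
    then obtain u where "v = (\<Sum>x\<in>ev ` mons. fscale (u x) x)"
      unfolding VS.span_finite[OF finite_imageI[OF finmons]] by blast
    then have vs: "v = (\<Sum>e\<in>mons. fscale (u (ev e)) (ev e))"
      unfolding sum.reindex[OF inj] comp_def .
    define c where "c e = u (ev e)" for e
    have key: "(if b = k then c (E k) else 0) = c (E (q - 1 - b))" if b: "b \<in> R" for b
    proof -
      have bb: "q - 1 - k \<le> b" "b \<le> k" using b unfolding R_def by auto
      have "E b \<in> mons" using E_in bb by simp
      then have "ev (E b) \<in> PRM n k" unfolding PRM_eq by (intro VS.span_base) blast
      then have "0 = ip n (ev (E b)) v" using ip_dual vD by simp
      also have "\<dots> = (\<Sum>e\<in>mons. c e * ip n (ev (E b)) (ev e))"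
        unfolding vs ip_lin2 c_def ..
      also have "\<dots> = (\<Sum>e\<in>mons. c e * ((if b = k \<and> e = E k then 1 else 0)
                          - (if e = E (q - 1 - b) then 1 else 0)))"
        using gram_excl[OF fin n1 kq, of b] bb assms(2)
        unfolding ev_def E_def mons_def by (intro sum.cong refl) simp
      also have "\<dots> = (\<Sum>e\<in>mons. if b = k \<and> e = E k then c e else 0)
                     - (\<Sum>e\<in>mons. if e = E (q - 1 - b) then c e else 0)"
        by (simp add: right_diff_distrib sum_subtractf if_distrib[of "(*) _"] cong: if_cong)
      also have "\<dots> = (if b = k then c (E k) else 0) - c (E (q - 1 - b))"
      proof -
        have "E k \<in> mons" by (rule E_in) simp
        moreover have "E (q - 1 - b) \<in> mons" by (rule E_in) (use bb in simp)
        ultimately show ?thesis using finmons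
          by (cases "b = k") (simp_all add: sum.delta')
      qed
      finally show ?thesis by simp
    qed
    have cz: "c (E a) = 0" if a: "a \<in> R" for a
    proof -
      have kR: "k \<in> R" and k_ne: "k \<noteq> q - 1 - k" unfolding R_def using assms by auto
      have gen: "c (E a') = 0" if "a' \<in> R" "a' \<noteq> q - 1 - k" for a'
      proof -
        have "q - 1 - a' \<in> R" "q - 1 - a' \<noteq> k" "q - 1 - (q - 1 - a') = a'"
          using that assms unfolding R_def by auto
        then show ?thesis using key[of "q - 1 - a'"] by simp
      qed
      show ?thesis
      proof (cases "a = q - 1 - k")
        case True
        have "c (E k) = c (E (q - 1 - k))" using key[OF kR] by simp
        then show ?thesis using gen[OF kR k_ne] True by simp
      qed (use gen a in simp)
    qed
    have "v = (\<Sum>e\<in>M. fscale (c e) (ev e)) + (\<Sum>e\<in>Ex. fscale (c e) (ev e))"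
      unfolding vs M_def c_def by (rule sum.subset_diff[OF Ex_sub finmons])
    also have "(\<Sum>e\<in>Ex. fscale (c e) (ev e)) = 0"
      using cz unfolding Ex_img by (intro sum.neutral) (auto simp: fscale_def zero_fun_def)
    finally have "v = (\<Sum>e\<in>M. fscale (c e) (ev e))" by simp
    also have "\<dots> \<in> VS.span (ev ` M)"
      by (intro VS.span_sum VS.span_scale VS.span_base) auto
    finally show "v \<in> VS.span (ev ` M)" .
  qed
  have hull_eq: "VS.span (ev ` M) = code_hull n (PRM n k)" using sub1 sub2 by blast
  have dimH: "dimF (code_hull n (PRM n k) :: ((nat \<Rightarrow> 'a) \<Rightarrow> 'a) set) = card mons - card Ex"
  proof -
    have "dimF (code_hull n (PRM n k) :: ((nat \<Rightarrow> 'a) \<Rightarrow> 'a) set) = card (ev ` M)"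
      unfolding dimF_def hull_eq[symmetric] by (rule VS.dim_span_eq_card_independent[OF indepM])
    also have "\<dots> = card M" by (rule card_image[OF injM])
    also have "\<dots> = card mons - card Ex" unfolding M_def by (rule card_Diff_subset[OF finite_subset[OF Ex_sub finmons] Ex_sub])
    finally show ?thesis .
  qed
  have arith: "2 * k + 1 - (q - 1) = Suc k - (q - 1 - k)" using assms(4,5) by linarith
  show ?thesis
    unfolding Let_def
    using dimH dimPRM cardmons cardEx arith injM indepM hull_eq
    unfolding M_def mons_def Ex_def ev_def by simp
qed

end
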